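(* Let $(d(t),\,t\ge0)$ be a nonnegative, locally integrable, weakly decreasing demand function, and fix an initial energy configuration $(E_i(0),\,i\in\mathcal S)$. If there is a cross-charging policy that completely serves $d$ on $[0,\infty)$, then $d$ is also completely served on $[0,\infty)$ without cross-charging (i.e. with $r_i(t)\ge0$ for all $i,t$), namely by the GGDDF policy.
   Context: A finite set $\mathcal S$ of energy stores is given. Store $i\in\mathcal S$ has capacity $\overline E_i>0$, maximum discharge rate $P_i>0$, maximum charge rate $P'_i\ge0$ and round-trip efficiency $\eta_i\in(0,1]$. A cross-charging policy is a choice of measurable rate functions $(r_i(t),\,t\ge0)$ with $E_i(t)=E_i(0)-\int_0^t r_i(u)\,du$, subject to $0\le E_i(t)\le\overline E_i$, $-P'_i\le r_i(t)\le P_i$, and $$0\le\sum_{i:\,r_i(t)\ge0}r_i(t)+\sum_{i:\,r_i(t)<0}r_i(t)/\eta_i\le d(t)\quad\text{for all }t\ge0$$ (negative $r_i$ means store $i$ is charged, drawing energy at rate $-r_i/\eta_i$ from other stores; no external energy is available). It completely serves $d$ on an interval $I$ if the middle expression equals $d(t)$ for almost every $t\in I$. A policy with all $r_i(t)\ge0$ is one without cross-charging. GGDDF (greedy greatest-discharge-duration-first) policy: at (almost) every time $t$, the total served rate is $\bar d(t)=\min\bigl(d(t),\sum_{i:E_i(t)>0}P_i\bigr)$, and it is allocated as follows: the nonempty stores are partitioned into groups $G_1,G_2,\dots$ of equal discharge-duration $E_i(t)/P_i$, listed in strictly decreasing order of that duration; letting $m$ be the least index with $\sum_{k\le m}\sum_{i\in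 G_k}P_i\ge\bar d(t)$, every store in $G_k$ with $k<m$ discharges at rate $P_i$, every store $i\in G_m$ discharges at rate $\lambda P_i$ with $\lambda\in(0,1]$ chosen so that $\sum_i r_i(t)=\bar d(t)$, and all other stores have rate $0$ (all rates are $0$ if $\bar d(t)=0$). *)

theory Defs
  imports "HOL-Analysis.Analysis"
begin

definition energy :: "('i \<Rightarrow> real) \<Rightarrow> ('i \<Rightarrow> real \<Rightarrow> real) \<Rightarrow> 'i \<Rightarrow> real \<Rightarrow> real" where
  "energy E0 r i t = E0 i - integral {0..t} (r i)"

definition served_rate :: "'i set \<Rightarrow> ('i \<Rightarrow> real) \<Rightarrow> ('i \<Rightarrow> real \<Rightarrow> real) \<Rightarrow> real \<Rightarrow> real" where
  "served_rate S eta r t =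
     (\<Sum>i\<in>{i\<in>S. r i t \<ge> 0}. r i t) + (\<Sum>i\<in>{i\<in>S. r i t < 0}. r i t / eta i)"

text \<open>Cross-charging policy (feasible policy) for stores S with capacities cap, max discharge
  rates P, max charge rates P', efficiencies eta, initial energies E0 and demand d.\<close>
definition cc_policy ::
  "'i set \<Rightarrow> ('i \<Rightarrow> real) \<Rightarrow> ('i \<Rightarrow> real) \<Rightarrow> ('i \<Rightarrow> real) \<Rightarrow> ('i \<Rightarrow> real) \<Rightarrow>
   ('i \<Rightarrow> real) \<Rightarrow> (real \<Rightarrow> real) \<Rightarrow> ('i \<Rightarrow> real \<Rightarrow> real) \<Rightarrow> bool" where
  "cc_policy S cap P P' eta E0 d r \<longleftrightarrow>
     (\<forall>i\<in>S. set_borel_measurable lborel {0..} (r i)) \<and>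
     (\<forall>i\<in>S. \<forall>t\<ge>0. 0 \<le> energy E0 r i t \<and> energy E0 r i t \<le> cap i \<and>
                     - P' i \<le> r i t \<and> r i t \<le> P i) \<and>
     (\<forall>t\<ge>0. 0 \<le> served_rate S eta r t \<and> served_rate S eta r t \<le> d t)"

definition completely_serves :: "'i set \<Rightarrow> ('i \<Rightarrow> real) \<Rightarrow> (real \<Rightarrow> real) \<Rightarrow> ('i \<Rightarrow> real \<Rightarrow> real) \<Rightarrow> bool" where
  "completely_serves S eta d r \<longleftrightarrow> (AE t in lborel. t \<ge> 0 \<longrightarrow> served_rate S eta r t = d t)"

definition no_cross_charging :: "'i set \<Rightarrow> ('i \<Rightarrow> real \<Rightarrow> real) \<Rightarrow> bool" where
  "no_cross_charging S r \<longleftrightarrow> (\<forall>i\<in>S. \<forall>t\<ge>0. r i t \<ge> 0)"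

text \<open>Groups = stores of N with equal duration; the group G_m is the one of duration tau,
  the largest duration value whose cumulative discharge capacity (over all groups of
  duration \<ge> tau, i.e. G_1..G_m) reaches dbar.\<close>
definition ggddf_at ::
  "'i set \<Rightarrow> ('i \<Rightarrow> real) \<Rightarrow> (real \<Rightarrow> real) \<Rightarrow> ('i \<Rightarrow> real \<Rightarrow> real) \<Rightarrow> ('i \<Rightarrow> real \<Rightarrow> real) \<Rightarrow> real \<Rightarrow> bool" where
  "ggddf_at S P d E r t \<longleftrightarrow>
     (let N = {i\<in>S. E i t > 0};
          dbar = min (d t) (\<Sum>i\<in>N. P i);
          dur = (\<lambda>i. E i t / P i);
          cum = (\<lambda>\<tau>. \<Sum>i\<in>{i\<in>N. dur i \<ge> \<tau>}. P i)
      in (dbar = 0 \<longrightarrow> (\<forall>i\<in>S. r i t = 0)) \<and>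
         (dbar \<noteq> 0 \<longrightarrow>
            (\<exists>\<tau>\<in>dur ` N. \<exists>lam::real.
               cum \<tau> \<ge> dbar \<and> (\<forall>\<tau>'\<in>dur ` N. \<tau>' > \<tau> \<longrightarrow> cum \<tau>' < dbar) \<and>
               0 < lam \<and> lam \<le> 1 \<and>
               (\<forall>i\<in>S. r i t = (if i \<in> N \<and> dur i > \<tau> then P i
                               else if i \<in> N \<and> dur i = \<tau> then lam * P i else 0)) \<and>
               (\<Sum>i\<in>S. r i t) = dbar)))"

definition is_ggddf :: "'i set \<Rightarrow> ('i \<Rightarrow> real) \<Rightarrow> ('i \<Rightarrow> real) \<Rightarrow> (real \<Rightarrow> real) \<Rightarrow> ('i \<Rightarrow> real \<Rightarrow> real) \<Rightarrow> bool" where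
  "is_ggddf S P E0 d r \<longleftrightarrow> (AE t in lborel. t \<ge> 0 \<longrightarrow> ggddf_at S P d (energy E0 r) r t)"

end

theory Submission
  imports Defs
begin



definition clamp :: "real \<Rightarrow> real" where "clamp x = max 0 (min 1 x)"

locale gg =
  fixes S :: "'i set" and P :: "'i \<Rightarrow> real" and d :: "real \<Rightarrow> real"
  assumes fin: "finite S" and Ppos: "\<And>i. i \<in> S \<Longrightarrow> 0 < P i"
    and dnn: "\<And>t. 0 \<le> t \<Longrightarrow> 0 \<le> d t"
    and dmono: "\<And>s t. 0 \<le> s \<Longrightarrow> s \<le> t \<Longrightarrow> d t \<le> d s"
begin

definition Ab :: "('i \<Rightarrow> real) \<Rightarrow> real \<Rightarrow> real" where
  "Ab y v = (\<Sum>j\<in>{j\<in>S. v < y j}. P j)"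
definition Bb :: "('i \<Rightarrow> real) \<Rightarrow> real \<Rightarrow> real" where
  "Bb y v = (\<Sum>j\<in>{j\<in>S. y j = v}. P j)"
definition NP :: "('i \<Rightarrow> real) \<Rightarrow> real" where
  "NP y = (\<Sum>j\<in>{j\<in>S. 0 < y j}. P j)"
definition rate :: "('i \<Rightarrow> real) \<Rightarrow> real \<Rightarrow> real \<Rightarrow> real" where
  "rate y D v = (if 0 < v then clamp ((D - Ab y v) / Bb y v) else 0)"

lemma sumP_nonneg: "0 \<le> (\<Sum>j\<in>A. P j)" if "A \<subseteq> S" for A
  using that Ppos by (intro sum_nonneg) (auto simp: less_imp_le)

lemma sumP_mono: "A \<subseteq> B \<Longrightarrow> B \<subseteq> S \<Longrightarrow> (\<Sum>j\<in>A. P j) \<le> (\<Sum>j\<in>B. P j)"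
  using Ppos fin by (intro sum_mono2) (auto intro: finite_subset less_imp_le)

lemma Bb_pos: "i \<in> S \<Longrightarrow> 0 < Bb y (y i)"
proof -
  assume i: "i \<in> S"
  have "P i \<le> (\<Sum>j\<in>{j\<in>S. y j = y i}. P j)"
    using i Ppos fin by (intro member_le_sum) (auto intro: less_imp_le)
  then show ?thesis using Ppos[OF i] unfolding Bb_def by linarith
qed

lemma rate_bounds: "0 \<le> rate y D v" "rate y D v \<le> 1"
  by (auto simp: rate_def clamp_def)

lemma NP_nonneg: "0 \<le> NP y" unfolding NP_def by (rule sumP_nonneg) auto

lemma alg:
  assumes E: "\<And>i. i \<in> S \<Longrightarrow> E i t = P i * y i"
    and r: "\<And>i. i \<in> S \<Longrightarrow> r i t = P i * rate y (min (d t) (NP y)) (y i)"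
    and dt: "0 \<le> d t"
  shows "ggddf_at S P d E r t \<and> (\<Sum>i\<in>S. r i t) = min (d t) (NP y)"
proof -
  define D where "D = min (d t) (NP y)"
  have D0: "0 \<le> D" using dt NP_nonneg by (simp add: D_def)
  have dur: "\<And>i. i \<in> S \<Longrightarrow> E i t / P i = y i" using E Ppos by (simp add: less_imp_neq[symmetric])
  have Neq: "{i\<in>S. E i t > 0} = {i\<in>S. 0 < y i}"
    using E Ppos by (auto simp: zero_less_mult_iff) (metis not_less_iff_gr_or_eq)
  have NPeq: "(\<Sum>i\<in>{i\<in>S. E i t > 0}. P i) = NP y" by (simp add: Neq NP_def)
  define N where "N = {i\<in>S. 0 < y i}"
  show ?thesis
  proof (cases "D = 0")
    case True
    have "r i t = 0" if "i \<in> S" for i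
    proof -
      have "Ab y (y i) \<ge> 0" unfolding Ab_def by (rule sumP_nonneg) auto
      then have "(D - Ab y (y i)) / Bb y (y i) \<le> 0"
        using Bb_pos[OF that, of y] True by (simp add: divide_nonneg_pos)
      then show ?thesis using r[OF that] by (simp add: D_def[symmetric] rate_def clamp_def)
    qed
    then show ?thesis unfolding ggddf_at_def Let_def NPeq D_def[symmetric] using True by simp
  next
    case False
    then have Dpos: "0 < D" using D0 by simp
    define C where "C v = (\<Sum>i\<in>{i\<in>S. 0 < y i \<and> v \<le> y i}. P i)" for v
    have NPpos: "0 < NP y" using Dpos by (simp add: D_def)
    have Nne: "N \<noteq> {}" using NPpos unfolding NP_def N_def by (metis sum.empty less_irrefl)
    have finN: "finite N" using fin by (simp add: N_def)
    define W where "W = {v \<in> y ` N. D \<le> C v}"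
    have finW: "finite W" using finN by (simp add: W_def)
    have Cmin: "C (Min (y ` N)) = NP y"
      unfolding C_def NP_def by (rule sum.cong) (use finN in \<open>auto simp: N_def\<close>)
    have "Min (y ` N) \<in> W" unfolding W_def using Cmin Nne finN by (auto simp: D_def)
    then have Wne: "W \<noteq> {}" by auto
    define \<tau> where "\<tau> = Max W"
    have tauW: "\<tau> \<in> W" using finW Wne by (simp add: \<tau>_def)
    have tauN: "\<tau> \<in> y ` N" and CtauD: "D \<le> C \<tau>" using tauW by (auto simp: W_def)
    have taupos: "0 < \<tau>" using tauN by (auto simp: N_def)
    have above: "C v < D" if "v \<in> y ` N" "\<tau> < v" for v
    proof (rule ccontr)
      assume "\<not> C v < D"
      then have "v \<in> W" using that by (auto simp: W_def)
      then have "v \<le> \<tau>" using finW by (simp add: \<tau>_def)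
      then show False using that by simp
    qed
    have CAB: "C v = Ab y v + Bb y v" if "0 < v" for v
    proof -
      have "C v = (\<Sum>i\<in>{i\<in>S. v < y i} \<union> {i\<in>S. y i = v}. P i)"
        unfolding C_def using that by (intro sum.cong) auto
      also have "\<dots> = Ab y v + Bb y v" unfolding Ab_def Bb_def
        by (rule sum.union_disjoint) (use fin in auto)
      finally show ?thesis .
    qed
    obtain i0 where i0: "i0 \<in> N" "y i0 = \<tau>" using tauN by auto
    have Bpos: "0 < Bb y \<tau>" using Bb_pos[of i0 y] i0 by (simp add: N_def)
    have Aless: "Ab y \<tau> < D"
    proof (rule ccontr)
      assume nl: "\<not> Ab y \<tau> < D"
      then have "0 < Ab y \<tau>" using Dpos by simp
      then have "{j\<in>S. \<tau> < y j} \<noteq> {}" unfolding Ab_def by (metis sum.empty less_irrefl)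
      then obtain j where j: "j \<in> S" "\<tau> < y j" by auto
      define U where "U = {v \<in> y ` N. \<tau> < v}"
      have Une: "U \<noteq> {}" using j taupos by (auto simp: U_def N_def)
      have finU: "finite U" using finN by (simp add: U_def)
      define \<tau>2 where "\<tau>2 = Min U"
      have t2U: "\<tau>2 \<in> U" using finU Une by (simp add: \<tau>2_def)
      have "C \<tau>2 = Ab y \<tau>"
        unfolding C_def Ab_def
      proof (rule sum.cong)
        show "{i \<in> S. 0 < y i \<and> \<tau>2 \<le> y i} = {j \<in> S. \<tau> < y j}"
        proof safe
          fix i assume "i \<in> S" "0 < y i" "\<tau>2 \<le> y i" then show "\<tau> < y i" using t2U by (auto simp: U_def)
        next
          fix i assume i: "i \<in> S" "\<tau> < y i"
          then show "0 < y i" using taupos by simp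
          have "y i \<in> U" using i taupos by (auto simp: U_def N_def)
          then show "\<tau>2 \<le> y i" using finU by (simp add: \<tau>2_def)
        qed
      qed simp
      then have "C \<tau>2 \<ge> D" using nl by simp
      moreover have "C \<tau>2 < D" using above t2U by (auto simp: U_def)
      ultimately show False by simp
    qed
    define lam where "lam = (D - Ab y \<tau>) / Bb y \<tau>"
    have lam0: "0 < lam" using Aless Bpos by (simp add: lam_def)
    have lam1: "lam \<le> 1" using CAB[OF taupos] CtauD Bpos by (simp add: lam_def)
    have rform: "r i t = (if i \<in> N \<and> y i > \<tau> then P i else if i \<in> N \<and> y i = \<tau> then lam * P i else 0)"
      if i: "i \<in> S" for i
    proof -
      have rr: "r i t = P i * rate y D (y i)" using r[OF i] by (simp add: D_def)
      consider "\<tau> < y i" | "y i = \<tau>" | "0 < y i" "y i < \<tau>" | "y i \<le> 0" by linarith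
      then show ?thesis
      proof cases
        case 1
        then have yN: "y i \<in> y ` N" "i \<in> N" using i taupos by (auto simp: N_def)
        have "Ab y (y i) + Bb y (y i) < D" using above[OF yN(1) 1] CAB[of "y i"] 1 taupos by simp
        then have "1 < (D - Ab y (y i)) / Bb y (y i)" using Bb_pos[OF i] by (simp add: field_simps)
        then have "rate y D (y i) = 1" using 1 taupos by (simp add: rate_def clamp_def)
        then show ?thesis using rr 1 yN by simp
      next
        case 2
        then have "rate y D (y i) = lam" using lam0 lam1 taupos by (simp add: rate_def clamp_def lam_def)
        then show ?thesis using rr 2 i taupos by (simp add: N_def)
      next
        case 3
        have "C \<tau> \<le> Ab y (y i)" unfolding C_def Ab_def
          by (rule sumP_mono) (use 3 in auto)
        then have "(D - Ab y (y i)) / Bb y (y i) \<le> 0" using CtauD Bb_pos[OF i]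
          by (simp add: divide_nonpos_pos)
        then have "rate y D (y i) = 0" by (simp add: rate_def clamp_def)
        then show ?thesis using rr 3 by simp
      next
        case 4
        then show ?thesis using rr by (simp add: rate_def N_def)
      qed
    qed
    have sumr: "(\<Sum>i\<in>S. r i t) = D"
    proof -
      have "(\<Sum>i\<in>S. r i t) = (\<Sum>i\<in>S. (if \<tau> < y i then P i else 0) + (if y i = \<tau> then lam * P i else 0))"
        by (rule sum.cong) (use rform taupos in \<open>auto simp: N_def\<close>)
      also have "\<dots> = Ab y \<tau> + lam * Bb y \<tau>"
        by (simp add: sum.distrib sum.If_cases fin Ab_def Bb_def sum_distrib_left Int_def conj_commute)
      also have "\<dots> = D" using Bpos by (simp add: lam_def)
      finally show ?thesis .
    qed
    have cumeq: "(\<Sum>i\<in>{i\<in>{i\<in>S. E i t > 0}. E i t / P i \<ge> v}. P i) = C v" for v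
      unfolding C_def Neq by (rule sum.cong) (auto simp: dur)
    have durimg: "(\<lambda>i. E i t / P i) ` {i\<in>S. E i t > 0} = y ` N"
      unfolding Neq N_def using dur by (auto simp: image_def)
    have "\<exists>\<tau>\<in>(\<lambda>i. E i t / P i) ` {i\<in>S. E i t > 0}. \<exists>lam::real.
               (\<Sum>i\<in>{i\<in>{i\<in>S. E i t > 0}. E i t / P i \<ge> \<tau>}. P i) \<ge> D \<and>
               (\<forall>\<tau>'\<in>(\<lambda>i. E i t / P i) ` {i\<in>S. E i t > 0}. \<tau>' > \<tau> \<longrightarrow> (\<Sum>i\<in>{i\<in>{i\<in>S. E i t > 0}. E i t / P i \<ge> \<tau>'}. P i) < D) \<and>
               0 < lam \<and> lam \<le> 1 \<and>
               (\<forall>i\<in>S. r i t = (if i \<in> {i\<in>S. E i t > 0} \<and> E i t / P i > \<tau> then P i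
                               else if i \<in> {i\<in>S. E i t > 0} \<and> E i t / P i = \<tau> then lam * P i else 0)) \<and>
               (\<Sum>i\<in>S. r i t) = D"
      unfolding durimg cumeq
      apply (rule bexI[OF _ tauN], rule exI[of _ lam])
      using CtauD above lam0 lam1 sumr rform dur by (auto simp: Neq[folded N_def])
    then show ?thesis unfolding ggddf_at_def Let_def NPeq D_def[symmetric] using False sumr by simp
  qed
qed

end



lemma int_before: "t \<le> s \<Longrightarrow> integral {s..t} (f::real\<Rightarrow>real) = 0"
  by (cases "t = s") auto

lemma int_piece_bounds:
  fixes f :: "real \<Rightarrow> real"
  assumes "f integrable_on {a..b}" "a \<le> b" "\<And>u. u \<in> {a..b} \<Longrightarrow> 0 \<le> f u \<and> f u \<le> 1"
  shows "0 \<le> integral {a..b} f" "integral {a..b} f \<le> b - a"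
proof -
  show "0 \<le> integral {a..b} f" using assms by (intro integral_nonneg) auto
  have "integral {a..b} f \<le> integral {a..b} (\<lambda>x. 1)"
    using assms by (intro integral_le) auto
  then show "integral {a..b} f \<le> b - a" using assms by simp
qed

lemma int_lip:
  fixes f :: "real \<Rightarrow> real"
  assumes int: "\<And>b. f integrable_on {s..b}" and bd: "\<And>u. s \<le> u \<Longrightarrow> 0 \<le> f u \<and> f u \<le> 1"
    and tt: "t \<le> t'"
  shows "\<bar>integral {s..t'} f - integral {s..t} f\<bar> \<le> t' - t"
proof (cases "t' \<le> s")
  case True then show ?thesis using tt by (simp add: int_before)
next
  case False
  show ?thesis
  proof (cases "t \<le> s")
    case True
    have "integral {s..t'} f \<le> t' - s" "0 \<le> integral {s..t'} f"
      using int_piece_bounds[OF int, of t'] False bd by auto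
    then show ?thesis using True by (simp add: int_before)
  next
    case f2: False
    have c: "integral {s..t} f + integral {t..t'} f = integral {s..t'} f"
      using Henstock_Kurzweil_Integration.integral_combine[where a=s and c=t and b=t' and f=f] f2 tt int[of t'] by auto
    have "f integrable_on {t..t'}" using integrable_subinterval_real[OF int[of t'], of t t'] f2 by auto
    then have "integral {t..t'} f \<le> t' - t" "0 \<le> integral {t..t'} f"
      using int_piece_bounds[of f t t'] tt bd f2 by auto
    then show ?thesis using c by simp
  qed
qed

lemma int_cont:
  fixes f :: "real \<Rightarrow> real"
  assumes int: "\<And>b. f integrable_on {s..b}" and bd: "\<And>u. s \<le> u \<Longrightarrow> 0 \<le> f u \<and> f u \<le> 1"
  shows "continuous_on A (\<lambda>t. integral {s..t} f)"
proof -
  have l: "\<bar>integral {s..t'} f - integral {s..t} f\<bar> \<le> \<bar>t' - t\<bar>" for t t'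
    using int_lip[OF int bd, of t t'] int_lip[OF int bd, of t' t]
    by (cases "t \<le> t'") (auto simp: abs_minus_commute)
  show ?thesis unfolding continuous_on_iff
    by (metis dist_real_def l order_le_less_trans)
qed

context gg begin

definition db :: "('i \<Rightarrow> real) \<Rightarrow> real \<Rightarrow> real" where "db y t = min (d t) (NP y)"

definition Gv :: "real \<Rightarrow> ('i \<Rightarrow> real) \<Rightarrow> real \<Rightarrow> real \<Rightarrow> real" where
  "Gv s y t v = v - integral {s..t} (\<lambda>u. rate y (db y u) v)"

definition Yp :: "real \<Rightarrow> ('i \<Rightarrow> real) \<Rightarrow> real \<Rightarrow> 'i \<Rightarrow> real" where
  "Yp s y t i = Gv s y t (y i)"

lemma Bb_nonneg: "0 \<le> Bb y v" unfolding Bb_def by (rule sumP_nonneg) auto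

lemma rate_anti:
  assumes "0 \<le> u" "u \<le> u'"
  shows "rate y (db y u') v \<le> rate y (db y u) v"
proof -
  have "db y u' \<le> db y u" using dmono[OF assms] by (auto simp: db_def)
  then have "(db y u' - Ab y v) / Bb y v \<le> (db y u - Ab y v) / Bb y v"
    using Bb_nonneg by (intro divide_right_mono) auto
  then show ?thesis by (auto simp: rate_def clamp_def)
qed

lemma rate_int: assumes "0 \<le> s" shows "(\<lambda>u. rate y (db y u) v) integrable_on {s..b}"
proof -
  have "mono_on {s..b} (\<lambda>u. - rate y (db y u) v)"
    using rate_anti assms by (auto simp: mono_on_def)
  then have "(\<lambda>u. - (- rate y (db y u) v)) integrable_on {s..b}"
    by (intro integrable_neg integrable_on_mono_on)
  then show ?thesis by simp
qed

lemma Gv_cont: "0 \<le> s \<Longrightarrow> continuous_on A (\<lambda>t. Gv s y t v)"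
  unfolding Gv_def using rate_bounds
  by (intro continuous_intros int_cont rate_int) auto

lemma Gv_zero[simp]: "Gv s y t 0 = 0" by (simp add: Gv_def rate_def)
lemma Gv_start[simp]: "Gv s y s v = v" by (simp add: Gv_def)

lemma Gv_le: "0 \<le> s \<Longrightarrow> Gv s y t v \<le> v"
  unfolding Gv_def using int_piece_bounds(1)[OF rate_int, of s t y v] rate_bounds
  by (cases "s \<le> t") (auto simp: int_before)

definition Ev :: "real \<Rightarrow> ('i \<Rightarrow> real) \<Rightarrow> real set" where
  "Ev s y = {t. s \<le> t \<and> ((\<exists>i\<in>S. \<exists>j\<in>S. y i \<noteq> y j \<and> Yp s y t i = Yp s y t j) \<or>
                           (\<exists>i\<in>S. 0 < y i \<and> Yp s y t i = 0))}"

definition nxt :: "real \<Rightarrow> ('i \<Rightarrow> real) \<Rightarrow> real" where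
  "nxt s y = (if Ev s y = {} then s + 1 else Inf (Ev s y))"

lemma Ev_bdd: "bdd_below (Ev s y)" by (rule bdd_belowI[of _ s]) (auto simp: Ev_def)

lemma nxt_le: "u \<in> Ev s y \<Longrightarrow> nxt s y \<le> u"
  unfolding nxt_def using Ev_bdd by (auto intro!: cInf_lower)

lemma Ev_closed: assumes "0 \<le> s" shows "closed (Ev s y)"
proof -
  have eq: "Ev s y = {s..} \<inter> ((\<Union>i\<in>S. \<Union>j\<in>S. if y i \<noteq> y j then {t. Gv s y t (y i) = Gv s y t (y j)} else {})
     \<union> (\<Union>i\<in>S. if 0 < y i then {t. Gv s y t (y i) = 0} else {}))"
    by (auto simp: Ev_def Yp_def split: if_splits)
  show ?thesis unfolding eq using fin
    by (intro closed_Int closed_Un closed_UN closed_atLeast)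
       (auto intro!: closed_Collect_eq Gv_cont assms continuous_intros)
qed

lemma nxt_in: "0 \<le> s \<Longrightarrow> Ev s y \<noteq> {} \<Longrightarrow> nxt s y \<in> Ev s y"
  unfolding nxt_def using closed_contains_Inf[of "Ev s y"] Ev_closed Ev_bdd by auto

lemma nxt_gt: assumes "0 \<le> s" shows "s < nxt s y"
proof (cases "Ev s y = {}")
  case True then show ?thesis by (simp add: nxt_def)
next
  case False
  have "nxt s y \<in> Ev s y" using nxt_in[OF assms False] .
  moreover have "s \<notin> Ev s y" by (auto simp: Ev_def Yp_def)
  ultimately show ?thesis by (auto simp: Ev_def less_le Yp_def)
qed

lemma cross_zero:
  fixes g :: "real \<Rightarrow> real"
  assumes "continuous_on UNIV g" "0 < g s" "g t \<le> 0" "s \<le> t"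
  shows "\<exists>u. s \<le> u \<and> u \<le> t \<and> g u = 0 \<and> (g t < 0 \<longrightarrow> u < t)"
proof -
  obtain u where "s \<le> u" "u \<le> t" "g u = 0"
    using IVT2'[of g t 0 s] assms continuous_on_subset by fastforce
  then show ?thesis by (metis less_le)
qed

context
  fixes s :: real and y :: "'i \<Rightarrow> real"
  assumes s0: "0 \<le> s" and ynn: "\<And>i. i \<in> S \<Longrightarrow> 0 \<le> y i"
begin

lemma ph_order:
  assumes i: "i \<in> S" and j: "j \<in> S" and lt: "y i < y j" and t: "s \<le> t" "t \<le> nxt s y"
  shows "Yp s y t i \<le> Yp s y t j" "t < nxt s y \<Longrightarrow> Yp s y t i < Yp s y t j"
proof -
  let ?g = "\<lambda>u. Yp s y u j - Yp s y u i"
  have cg: "continuous_on UNIV ?g" unfolding Yp_def by (intro continuous_intros Gv_cont s0)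
  have g0: "0 < ?g s" using lt by (simp add: Yp_def)
  have ev: "u \<in> Ev s y" if "s \<le> u" "?g u = 0" for u
  proof -
    have "y i \<noteq> y j \<and> Yp s y u i = Yp s y u j" using that lt by auto
    then show ?thesis using that i j unfolding Ev_def by blast
  qed
  show "Yp s y t i \<le> Yp s y t j"
  proof (rule ccontr)
    assume "\<not> ?thesis"
    then have "?g t < 0" by simp
    then obtain u where "s \<le> u" "u < t" "?g u = 0" using cross_zero[OF cg g0, of t] t by force
    then show False using nxt_le[OF ev] t by fastforce
  qed
  assume tl: "t < nxt s y"
  show "Yp s y t i < Yp s y t j"
  proof (rule ccontr)
    assume "\<not> ?thesis"
    then have "?g t \<le> 0" by simp
    then obtain u where "s \<le> u" "u \<le> t" "?g u = 0" using cross_zero[OF cg g0, of t] t by force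
    then show False using nxt_le[OF ev] tl by fastforce
  qed
qed

lemma ph_pos:
  assumes i: "i \<in> S" and t: "s \<le> t" "t \<le> nxt s y"
  shows "0 \<le> Yp s y t i" "t < nxt s y \<Longrightarrow> 0 < y i \<Longrightarrow> 0 < Yp s y t i"
proof -
  have main: "0 \<le> Yp s y t i \<and> (t < nxt s y \<longrightarrow> 0 < Yp s y t i)" if pos: "0 < y i"
  proof -
    let ?g = "\<lambda>u. Yp s y u i"
    have cg: "continuous_on UNIV ?g" unfolding Yp_def by (intro continuous_intros Gv_cont s0)
    have g0: "0 < ?g s" using pos by (simp add: Yp_def)
    have ev: "u \<in> Ev s y" if "s \<le> u" "?g u = 0" for u
      using that i pos by (auto simp: Ev_def)
    have A: "0 \<le> ?g t"
    proof (rule ccontr)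
      assume "\<not> ?thesis"
      then have "?g t < 0" by simp
      then obtain u where "s \<le> u" "u < t" "?g u = 0" using cross_zero[OF cg g0, of t] t by force
      then show False using nxt_le[OF ev] t by fastforce
    qed
    have B: "0 < ?g t" if tl: "t < nxt s y"
    proof (rule ccontr)
      assume "\<not> ?thesis"
      then have "?g t \<le> 0" by simp
      then obtain u where "s \<le> u" "u \<le> t" "?g u = 0" using cross_zero[OF cg g0, of t] t by force
      then show False using nxt_le[OF ev] tl by fastforce
    qed
    show ?thesis using A B by simp
  qed
  have "y i = 0 \<Longrightarrow> Yp s y t i = 0" by (simp add: Yp_def)
  then show "0 \<le> Yp s y t i" using main ynn[OF i] by (cases "y i = 0") auto
  show "t < nxt s y \<Longrightarrow> 0 < y i \<Longrightarrow> 0 < Yp s y t i" using main by auto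
qed

lemma ph_le_mono:
  assumes i: "i \<in> S" and j: "j \<in> S" and le: "y i \<le> y j" and t: "s \<le> t" "t \<le> nxt s y"
  shows "Yp s y t i \<le> Yp s y t j"
  using ph_order[OF i j _ t] le by (cases "y i = y j") (auto simp: Yp_def)

lemma ph_iff:
  assumes i: "i \<in> S" and j: "j \<in> S" and t: "s \<le> t" "t < nxt s y"
  shows "Yp s y t i < Yp s y t j \<longleftrightarrow> y i < y j"
    and "Yp s y t i = Yp s y t j \<longleftrightarrow> y i = y j"
    and "0 < Yp s y t i \<longleftrightarrow> 0 < y i"
proof -
  have o1: "y i < y j \<Longrightarrow> Yp s y t i < Yp s y t j" using ph_order(2)[OF i j _ t(1)] t by auto
  have o2: "y j < y i \<Longrightarrow> Yp s y t j < Yp s y t i" using ph_order(2)[OF j i _ t(1)] t by auto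
  have o3: "y i = y j \<Longrightarrow> Yp s y t i = Yp s y t j" by (simp add: Yp_def)
  show "Yp s y t i < Yp s y t j \<longleftrightarrow> y i < y j" using o1 o2 o3 by (metis less_asym linorder_neqE)
  show "Yp s y t i = Yp s y t j \<longleftrightarrow> y i = y j" using o1 o2 o3 by (metis less_irrefl linorder_neqE)
  have "y i = 0 \<Longrightarrow> Yp s y t i = 0" by (simp add: Yp_def)
  then show "0 < Yp s y t i \<longleftrightarrow> 0 < y i" using ph_pos(2)[OF i t(1)] t ynn[OF i] by force
qed

lemma ph_rate:
  assumes i: "i \<in> S" and t: "s \<le> t" "t < nxt s y"
  defines "z \<equiv> (\<lambda>j. Yp s y t j)"
  shows "rate z (db z t) (z i) = rate y (db y t) (y i)"
proof -
  have NPe: "NP z = NP y" unfolding NP_def z_def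
    by (rule sum.cong) (use ph_iff(3)[OF _ i] t in auto)
  have Abe: "Ab z (z i) = Ab y (y i)" unfolding Ab_def z_def
    by (rule sum.cong) (use ph_iff(1) t i in auto)
  have Bbe: "Bb z (z i) = Bb y (y i)" unfolding Bb_def z_def
    by (rule sum.cong) (use ph_iff(2) t i in auto)
  have pe: "0 < z i \<longleftrightarrow> 0 < y i" unfolding z_def using ph_iff(3)[OF i i t] .
  show ?thesis unfolding rate_def db_def using NPe Abe Bbe pe by simp
qed

lemma ph_card:
  defines "y' \<equiv> (\<lambda>i. Yp s y (nxt s y) i)"
  shows "card (y' ` S \<union> {0}) \<le> card (y ` S \<union> {0})"
    and "Ev s y \<noteq> {} \<Longrightarrow> card (y' ` S \<union> {0}) < card (y ` S \<union> {0})"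
proof -
  let ?G = "Gv s y (nxt s y)"
  have img: "y' ` S \<union> {0} = ?G ` (y ` S \<union> {0})"
    by (auto simp: y'_def Yp_def image_image)
  have finX: "finite (y ` S \<union> {0})" using fin by simp
  show "card (y' ` S \<union> {0}) \<le> card (y ` S \<union> {0})" using card_image_le[OF finX, of ?G] img by simp
  assume ne: "Ev s y \<noteq> {}"
  have "nxt s y \<in> Ev s y" using nxt_in[OF s0 ne] .
  then have ninj: "\<not> inj_on ?G (y ` S \<union> {0})"
    unfolding Ev_def Yp_def inj_on_def by auto
  have "card (?G ` (y ` S \<union> {0})) \<noteq> card (y ` S \<union> {0})"
    using ninj inj_on_iff_eq_card[OF finX] by blast
  then show "card (y' ` S \<union> {0}) < card (y ` S \<union> {0})"
    unfolding img using card_image_le[OF finX, of ?G] by simp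
qed

end
end



context gg begin

primrec st :: "('i \<Rightarrow> real) \<Rightarrow> nat \<Rightarrow> real \<times> ('i \<Rightarrow> real)" where
  "st y0 0 = (0, y0)"
| "st y0 (Suc k) = (nxt (fst (st y0 k)) (snd (st y0 k)),
     \<lambda>i. Yp (fst (st y0 k)) (snd (st y0 k)) (nxt (fst (st y0 k)) (snd (st y0 k))) i)"

end

locale gg0 = gg S P d for S :: "'i set" and P d +
  fixes y0 :: "'i \<Rightarrow> real" and E0 :: "'i \<Rightarrow> real"
  assumes y0nn: "\<And>i. i \<in> S \<Longrightarrow> 0 \<le> y0 i"
    and E0y: "\<And>i. i \<in> S \<Longrightarrow> E0 i = P i * y0 i"
begin

definition sk :: "nat \<Rightarrow> real" where "sk k = fst (st y0 k)"
definition yk :: "nat \<Rightarrow> 'i \<Rightarrow> real" where "yk k = snd (st y0 k)"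

lemma sk0[simp]: "sk 0 = 0" and yk0[simp]: "yk 0 = y0"
  by (simp_all add: sk_def yk_def)
lemma skS: "sk (Suc k) = nxt (sk k) (yk k)"
  and ykS: "yk (Suc k) = (\<lambda>i. Yp (sk k) (yk k) (sk (Suc k)) i)"
  by (simp_all add: sk_def yk_def)

lemma inv: "0 \<le> sk k \<and> (\<forall>i\<in>S. 0 \<le> yk k i)"
proof (induction k)
  case 0 then show ?case using y0nn by simp
next
  case (Suc k)
  then have a: "0 \<le> sk k" "\<And>i. i \<in> S \<Longrightarrow> 0 \<le> yk k i" by auto
  have lt: "sk k < sk (Suc k)" using nxt_gt[OF a(1)] by (simp add: skS)
  have "0 \<le> yk (Suc k) i" if "i \<in> S" for i
    unfolding ykS skS
    by (rule ph_pos(1)[of "sk k" "yk k" i "nxt (sk k) (yk k)"]) (use a that nxt_gt[OF a(1), of "yk k"] in auto)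
  then show ?case using lt a by simp
qed

lemma sk_nn: "0 \<le> sk k" and yk_nn: "i \<in> S \<Longrightarrow> 0 \<le> yk k i" using inv by auto

lemma sk_lt: "sk k < sk (Suc k)" using nxt_gt[OF sk_nn] by (simp add: skS)

lemma sk_mono: "strict_mono sk" by (rule strict_mono_Suc_iff[THEN iffD2]) (simp add: sk_lt)

definition ck :: "nat \<Rightarrow> nat" where "ck k = card (yk k ` S \<union> {0})"

lemma ck_le: "ck (Suc k) \<le> ck k"
  unfolding ck_def using ph_card(1)[of "sk k" "yk k", OF sk_nn yk_nn] by (simp add: ykS skS)

lemma ck_lt: "Ev (sk k) (yk k) \<noteq> {} \<Longrightarrow> ck (Suc k) < ck k"
  unfolding ck_def using ph_card(2)[of "sk k" "yk k", OF sk_nn yk_nn] by (simp add: ykS skS)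

lemma sk_bound: "real k \<le> sk k + real (ck 0) - real (ck k)"
proof (induction k)
  case 0 then show ?case by simp
next
  case (Suc k)
  show ?case
  proof (cases "Ev (sk k) (yk k) = {}")
    case True
    then have "sk (Suc k) = sk k + 1" by (simp add: skS nxt_def)
    then show ?thesis using Suc ck_le[of k] by simp
  next
    case False
    then show ?thesis using Suc ck_lt[OF False] sk_lt[of k] by simp
  qed
qed

lemma sk_unbounded: "\<exists>k. T < sk k"
proof -
  obtain k :: nat where "T + real (ck 0) < real k" using reals_Archimedean2 by blast
  then show ?thesis using sk_bound[of k] by (intro exI[of _ k]) simp
qed

definition ph :: "real \<Rightarrow> nat" where "ph t = (LEAST k. t < sk (Suc k))"

lemma ph_eq: assumes "sk k \<le> t" "t < sk (Suc k)" shows "ph t = k"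
  unfolding ph_def
proof (rule Least_equality)
  show "t < sk (Suc k)" by fact
  fix m assume "t < sk (Suc m)"
  then show "k \<le> m" using assms sk_mono
    by (metis not_less_eq_eq order.strict_trans2 strict_mono_less_eq order_less_irrefl)
qed

lemma ph_bounds: assumes "0 \<le> t" shows "sk (ph t) \<le> t" "t < sk (Suc (ph t))"
proof -
  obtain k where k: "t < sk k" using sk_unbounded by blast
  have ex: "t < sk (Suc k)" using k sk_lt[of k] by simp
  show b: "t < sk (Suc (ph t))" unfolding ph_def by (rule LeastI[of _ k]) (rule ex)
  show "sk (ph t) \<le> t"
  proof (cases "ph t")
    case 0 then show ?thesis using assms by simp
  next
    case (Suc m)
    have "\<not> t < sk (Suc m)" using Suc not_less_Least[of m "\<lambda>k. t < sk (Suc k)"] unfolding ph_def by simp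
    then show ?thesis using Suc by simp
  qed
qed

definition zt :: "real \<Rightarrow> 'i \<Rightarrow> real" where
  "zt t i = Yp (sk (ph t)) (yk (ph t)) t i"

definition rr :: "'i \<Rightarrow> real \<Rightarrow> real" where
  "rr i t = (if 0 \<le> t then P i * rate (yk (ph t)) (db (yk (ph t)) t) (yk (ph t) i) else 0)"

lemma rr_phase: "sk k \<le> u \<Longrightarrow> u < sk (Suc k) \<Longrightarrow> rr i u = P i * rate (yk k) (db (yk k) u) (yk k i)"
  using ph_eq[of k u] sk_nn[of k] by (simp add: rr_def)

lemma phase_int:
  assumes "sk k \<le> t" "t \<le> sk (Suc k)"
  shows "(rr i has_integral (P i * (yk k i - Yp (sk k) (yk k) t i))) {sk k..t}"
proof -
  have "((\<lambda>u. rate (yk k) (db (yk k) u) (yk k i)) has_integral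
        integral {sk k..t} (\<lambda>u. rate (yk k) (db (yk k) u) (yk k i))) {sk k..t}"
    using rate_int[OF sk_nn] by blast
  then have h: "((\<lambda>u. P i * rate (yk k) (db (yk k) u) (yk k i)) has_integral
        (P i * (yk k i - Yp (sk k) (yk k) t i))) {sk k..t}"
    unfolding Yp_def Gv_def by (simp add: has_integral_mult_right)
  show ?thesis
    by (rule has_integral_spike[OF negligible_sing[of t] _ h]) (use assms rr_phase in auto)
qed


lemma cum_int:
  assumes i: "i \<in> S"
  shows "sk k \<le> t \<Longrightarrow> t \<le> sk (Suc k) \<Longrightarrow> (rr i has_integral (E0 i - P i * Yp (sk k) (yk k) t i)) {0..t}"
proof (induction k arbitrary: t)
  case 0
  then show ?case using phase_int[of 0 t i] E0y[OF i] by (simp add: algebra_simps)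
next
  case (Suc k)
  have a: "(rr i has_integral (E0 i - P i * yk (Suc k) i)) {0..sk (Suc k)}"
    using Suc.IH[of "sk (Suc k)"] sk_lt[of k] by (simp add: ykS)
  have b: "(rr i has_integral (P i * (yk (Suc k) i - Yp (sk (Suc k)) (yk (Suc k)) t i))) {sk (Suc k)..t}"
    using phase_int[of "Suc k" t i] Suc.prems by simp
  have "(rr i has_integral ((E0 i - P i * yk (Suc k) i) + P i * (yk (Suc k) i - Yp (sk (Suc k)) (yk (Suc k)) t i))) {0..t}"
    by (rule has_integral_combine[OF _ _ a b]) (use sk_nn Suc.prems in auto)
  then show ?case by (simp add: algebra_simps)
qed

lemma energy_eq:
  assumes i: "i \<in> S" and t: "0 \<le> t"
  shows "(rr i has_integral (E0 i - P i * zt t i)) {0..t}" "energy E0 rr i t = P i * zt t i"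
proof -
  show h: "(rr i has_integral (E0 i - P i * zt t i)) {0..t}"
    unfolding zt_def using cum_int[OF i, of "ph t" t] ph_bounds[OF t] by simp
  show "energy E0 rr i t = P i * zt t i" using integral_unique[OF h] by (simp add: energy_def)
qed

lemma zt_nn: "i \<in> S \<Longrightarrow> 0 \<le> t \<Longrightarrow> 0 \<le> zt t i"
  unfolding zt_def using ph_pos(1)[of "sk (ph t)" "yk (ph t)" i t, OF sk_nn yk_nn] ph_bounds[of t] by (simp add: skS)

lemma closed_loop:
  assumes i: "i \<in> S" and t: "0 \<le> t"
  shows "rr i t = P i * rate (zt t) (db (zt t) t) (zt t i)"
proof -
  have "rate (zt t) (db (zt t) t) (zt t i) = rate (yk (ph t)) (db (yk (ph t)) t) (yk (ph t) i)"
    unfolding zt_def[abs_def] using ph_rate[of "sk (ph t)" "yk (ph t)" i t, OF sk_nn yk_nn i] ph_bounds[OF t] skS by simp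
  then show ?thesis using t by (simp add: rr_def)
qed

lemma rr_bounds: "i \<in> S \<Longrightarrow> 0 \<le> rr i t \<and> rr i t \<le> P i"
proof -
  assume i: "i \<in> S"
  have "0 \<le> P i" using Ppos[OF i] by simp
  then show ?thesis using rate_bounds
    by (auto simp: rr_def intro: mult_left_le mult_nonneg_nonneg)
qed

lemma yk_mono: "k \<le> m \<Longrightarrow> i \<in> S \<Longrightarrow> j \<in> S \<Longrightarrow> yk k i \<le> yk k j \<Longrightarrow> yk m i \<le> yk m j"
proof (induction m rule: dec_induct)
  case (step n)
  then show ?case
    unfolding ykS using ph_le_mono[of "sk n" "yk n" i j "sk (Suc n)", OF sk_nn yk_nn] sk_lt[of n] by (simp add: skS)
qed simp

lemma zt_order:
  assumes i: "i \<in> S" and j: "j \<in> S" and st: "0 \<le> s" "s \<le> t" and le: "zt s i \<le> zt s j"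
  shows "zt t i \<le> zt t j"
proof -
  define k where "k = ph s"
  define m where "m = ph t"
  have t0: "0 \<le> t" using st by simp
  have km: "k \<le> m"
  proof (rule ccontr)
    assume "\<not> k \<le> m"
    then have "Suc m \<le> k" by simp
    then have "sk (Suc m) \<le> sk k" using sk_mono by (simp add: strict_mono_less_eq)
    then show False using ph_bounds[OF st(1)] ph_bounds[OF t0] st unfolding k_def m_def by simp
  qed
  have "yk k i \<le> yk k j"
  proof (rule ccontr)
    assume "\<not> ?thesis"
    then have "zt s j < zt s i"
      unfolding zt_def k_def using ph_iff(1)[of "sk (ph s)" "yk (ph s)" j i s, OF sk_nn yk_nn j i] ph_bounds[OF st(1)] skS
      by simp
    then show False using le by simp
  qed
  then have "yk m i \<le> yk m j" using yk_mono[OF km i j] by simp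
  then show ?thesis
    unfolding zt_def m_def[symmetric]
    using ph_le_mono[of "sk m" "yk m" i j t, OF sk_nn yk_nn i j] ph_bounds[OF t0] skS unfolding m_def by simp
qed

lemma rr_meas: assumes i: "i \<in> S" shows "set_borel_measurable lborel {0..} (rr i)"
proof -
  define f where "f x = - (indicator {0..} x *\<^sub>R rr i x)" for x :: real
  define C where "C = insert {..<0} (range (\<lambda>k. {sk k..<sk (Suc k)}))"
  have "f \<in> borel_measurable borel"
  proof (rule borel_measurable_piecewise_mono[of C])
    show "countable C" by (simp add: C_def)
    show "c \<in> sets borel" if "c \<in> C" for c using that by (auto simp: C_def)
    show "mono_on c f" if cC: "c \<in> C" for c
    proof -
      consider "c = {..<0}" | k where "c = {sk k..<sk (Suc k)}" using cC unfolding C_def by blast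
      then show ?thesis
      proof cases
        case 1 then show ?thesis by (auto simp: mono_on_def f_def)
      next
        case 2
        show ?thesis unfolding mono_on_def 2
        proof safe
          fix u u' assume u: "u \<in> {sk k..<sk (Suc k)}" "u' \<in> {sk k..<sk (Suc k)}" "u \<le> u'"
          have "rate (yk k) (db (yk k) u') (yk k i) \<le> rate (yk k) (db (yk k) u) (yk k i)"
            using rate_anti[of u u'] u sk_nn[of k] by auto
          then have "P i * rate (yk k) (db (yk k) u') (yk k i) \<le> P i * rate (yk k) (db (yk k) u) (yk k i)"
            using Ppos[OF i] by (simp add: mult_left_mono)
          then show "f u \<le> f u'" using u sk_nn[of k] rr_phase[of k u i] rr_phase[of k u' i]
            by (simp add: f_def indicator_def)
        qed
      qed
    qed
    show "\<Union>C = UNIV"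
    proof safe
      fix x :: real
      show "x \<in> \<Union>C"
      proof (cases "x < 0")
        case True then show ?thesis by (auto simp: C_def)
      next
        case False
        then have "x \<in> {sk (ph x)..<sk (Suc (ph x))}" using ph_bounds[of x] by auto
        then show ?thesis by (auto simp: C_def)
      qed
    qed auto
  qed
  then have "(\<lambda>x. - f x) \<in> borel_measurable borel" by measurable
  then show ?thesis unfolding set_borel_measurable_def f_def by simp
qed

end



lemma meas_int:
  fixes f :: "real \<Rightarrow> real"
  assumes m: "set_borel_measurable lborel {0..} f" and b: "\<And>t. 0 \<le> t \<Longrightarrow> \<bar>f t\<bar> \<le> c"
  shows "f integrable_on {0..T}"
proof -
  define g where "g x = indicator {0..} x *\<^sub>R f x" for x :: real
  have "g \<in> borel_measurable lborel" using m unfolding set_borel_measurable_def g_def by simp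
  then have "g \<in> borel_measurable lebesgue" by (rule measurable_completion)
  then have gm: "g \<in> borel_measurable (lebesgue_on {0..T})" by (rule measurable_restrict_space1)
  have "g integrable_on {0..T}"
    by (rule measurable_bounded_by_integrable_imp_integrable_real[OF gm, of "\<lambda>_. c"])
       (use b in \<open>auto simp: g_def\<close>)
  then show ?thesis by (rule integrable_eq) (auto simp: g_def)
qed

lemma AE_negl: "AE x in lborel. Q x \<Longrightarrow> \<exists>N. negligible N \<and> {x. \<not> Q x} \<subseteq> N"
  using AE_completion[of "\<lambda>x. Q x" lborel] eventually_ae_filter_negligible by blast

lemma nonneg_int0_AE:
  fixes h :: "real \<Rightarrow> real"
  assumes hi: "h integrable_on {a..b}" and nn: "\<And>x. x \<in> {a..b} \<Longrightarrow> 0 \<le> h x"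
    and z: "integral {a..b} h = 0"
  shows "AE x in lborel. x \<in> {a..b} \<longrightarrow> h x = 0"
proof -
  have ai: "h absolutely_integrable_on {a..b}"
    by (rule absolutely_integrable_onI[OF hi]) (rule integrable_eq[OF hi], use nn in auto)
  have "set_lebesgue_integral lebesgue {a..b} h = 0"
    using set_lebesgue_integral_eq_integral(2)[OF ai] z by simp
  then have "AE x in lebesgue. indicator {a..b} x *\<^sub>R h x = 0"
    unfolding set_lebesgue_integral_def
    by (subst (asm) integral_nonneg_eq_0_iff_AE)
       (use ai nn in \<open>auto simp: set_integrable_def indicator_def\<close>)
  then have "AE x in lebesgue. x \<in> {a..b} \<longrightarrow> h x = 0"
    by eventually_elim (auto simp: indicator_def)
  then show ?thesis by (simp add: AE_completion_iff)
qed

lemma served_le: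
  assumes "finite S" "\<And>i. i \<in> S \<Longrightarrow> 0 < eta i \<and> eta i \<le> 1"
  shows "served_rate S eta r t \<le> (\<Sum>i\<in>S. r i t)"
proof -
  have split: "(\<Sum>i\<in>S. r i t) = (\<Sum>i\<in>{i\<in>S. r i t \<ge> 0}. r i t) + (\<Sum>i\<in>{i\<in>S. r i t < 0}. r i t)"
    using assms(1) by (subst sum.union_disjoint[symmetric]) (auto intro: sum.cong)
  have "(\<Sum>i\<in>{i\<in>S. r i t < 0}. r i t / eta i) \<le> (\<Sum>i\<in>{i\<in>S. r i t < 0}. r i t)"
  proof (rule sum_mono)
    fix i assume i: "i \<in> {i\<in>S. r i t < 0}"
    then have e: "0 < eta i" "eta i \<le> 1" using assms(2) by auto
    have "r i t \<le> r i t * eta i" using i e by (simp add: mult_le_cancel_left1)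
    then show "r i t / eta i \<le> r i t" using e by (simp add: divide_le_eq)
  qed
  then show ?thesis unfolding served_rate_def split by simp
qed

lemma cc_bound:
  assumes fin: "finite S"
    and pars: "\<forall>i\<in>S. cap i > 0 \<and> P i > 0 \<and> P' i \<ge> 0 \<and> 0 < eta i \<and> eta i \<le> 1"
    and cc: "cc_policy S cap P P' eta E0 d r" and cs: "completely_serves S eta d r"
    and di: "d integrable_on {0..T}" and T: "0 \<le> T"
  shows "integral {0..T} d \<le> (\<Sum>i\<in>S. min (E0 i) (P i * T))"
proof -
  have ri: "r i integrable_on {0..T}" if i: "i \<in> S" for i
  proof (rule meas_int)
    show "set_borel_measurable lborel {0..} (r i)" using cc i by (simp add: cc_policy_def)
    show "\<bar>r i t\<bar> \<le> max (P i) (P' i)" if "0 \<le> t" for t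
      using cc i that unfolding cc_policy_def by (metis abs_le_iff max.coboundedI1 max.coboundedI2 minus_le_iff)
  qed
  have rb: "integral {0..T} (r i) \<le> min (E0 i) (P i * T)" if i: "i \<in> S" for i
  proof -
    have "0 \<le> energy E0 r i T" using cc i T by (simp add: cc_policy_def)
    then have a: "integral {0..T} (r i) \<le> E0 i" by (simp add: energy_def)
    have "integral {0..T} (r i) \<le> integral {0..T} (\<lambda>_. P i)"
      by (rule integral_le[OF ri[OF i]]) (use cc i in \<open>auto simp: cc_policy_def\<close>)
    then have b: "integral {0..T} (r i) \<le> P i * T" using T by (simp add: mult.commute)
    show ?thesis using a b by simp
  qed
  obtain N where N: "negligible N" "{t. \<not> (0 \<le> t \<longrightarrow> served_rate S eta r t = d t)} \<subseteq> N"
    using AE_negl cs unfolding completely_serves_def by blast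
  have sh: "((\<lambda>t. served_rate S eta r t) has_integral integral {0..T} d) {0..T}"
    by (rule has_integral_spike[OF N(1) _ integrable_integral[OF di]]) (use N(2) in auto)
  have sumh: "((\<lambda>t. \<Sum>i\<in>S. r i t) has_integral (\<Sum>i\<in>S. integral {0..T} (r i))) {0..T}"
    by (rule has_integral_sum[OF fin]) (use ri in blast)
  have "integral {0..T} d \<le> (\<Sum>i\<in>S. integral {0..T} (r i))"
    by (rule has_integral_le[OF sh sumh]) (use served_le[OF fin] pars in auto)
  also have "\<dots> \<le> (\<Sum>i\<in>S. min (E0 i) (P i * T))" by (rule sum_mono) (rule rb)
  finally show ?thesis .
qed

lemma cover_AE:
  fixes F :: "real set" and Q :: "real \<Rightarrow> bool"
  assumes fa: "\<And>T. T \<in> F \<Longrightarrow> AE t in lborel. t \<in> {0..T} \<longrightarrow> Q t"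
    and nf: "\<And>t. 0 \<le> t \<Longrightarrow> t \<notin> F \<Longrightarrow> Q t"
  shows "AE t in lborel. 0 \<le> t \<longrightarrow> Q t"
proof -
  have n: "AE t in lborel. t \<in> {0..real n} \<longrightarrow> Q t" for n :: nat
  proof (cases "F \<inter> {0..real n} = {}")
    case True
    show ?thesis
    proof (intro AE_I2 impI)
      fix t assume t: "t \<in> {0..real n}"
      then have "t \<notin> F" using True by blast
      then show "Q t" using nf t by auto
    qed
  next
    case False
    define Fn where "Fn = F \<inter> {0..real n}"
    have bdd: "bdd_above Fn" by (auto simp: Fn_def bdd_above_def)
    define \<sigma> where "\<sigma> = Sup Fn"
    have Fne: "Fn \<noteq> {}" using False by (simp add: Fn_def)
    have "\<exists>T\<in>Fn. \<sigma> - inverse (real (Suc m)) < T" for m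
    proof -
      have "\<sigma> - inverse (real (Suc m)) < Sup Fn" by (simp add: \<sigma>_def)
      then show ?thesis by (rule less_cSupE[OF _ Fne]) blast
    qed
    then obtain Tm where Tm: "\<And>m. Tm m \<in> Fn" "\<And>m. \<sigma> - inverse (real (Suc m)) < Tm m" by metis
    have "AE t in lborel. \<forall>m. t \<in> {0..Tm m} \<longrightarrow> Q t"
      unfolding AE_all_countable
    proof
      fix m show "AE t in lborel. t \<in> {0..Tm m} \<longrightarrow> Q t" using Tm(1)[of m] fa unfolding Fn_def by blast
    qed
    moreover have "AE t in lborel. t \<noteq> \<sigma>" by (rule AE_lborel_singleton)
    ultimately show ?thesis
    proof eventually_elim
      case (elim t)
      show ?case
      proof
        assume t: "t \<in> {0..real n}"
        show "Q t"
        proof (cases "t \<in> F")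
          case False then show ?thesis using nf t by auto
        next
          case True
          then have "t \<in> Fn" using t by (simp add: Fn_def)
          then have "t \<le> \<sigma>" using bdd by (simp add: \<sigma>_def cSup_upper)
          then have "0 < \<sigma> - t" using elim by simp
          then obtain m where "inverse (real (Suc m)) < \<sigma> - t" using reals_Archimedean by blast
          then have "t \<le> Tm m" using Tm(2)[of m] by simp
          then show ?thesis using elim t by (metis atLeastAtMost_iff)
        qed
      qed
    qed
  qed
  have "AE t in lborel. \<forall>n::nat. t \<in> {0..real n} \<longrightarrow> Q t" unfolding AE_all_countable using n by blast
  then show ?thesis
  proof eventually_elim
    case (elim t)
    show ?case
    proof
      assume "0 \<le> t"
      obtain n :: nat where "t \<le> real n" using real_arch_simple by blast
      then show "Q t" using elim \<open>0 \<le> t\<close> by (metis atLeastAtMost_iff)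
    qed
  qed
qed

context gg0 begin

lemma zt_anti: assumes i: "i \<in> S" and st: "0 \<le> s" "s \<le> t" shows "zt t i \<le> zt s i"
proof -
  have t0: "0 \<le> t" using st by simp
  have hs: "(rr i has_integral (E0 i - P i * zt s i)) {0..s}" using energy_eq(1)[OF i st(1)] .
  have ht: "(rr i has_integral (E0 i - P i * zt t i)) {0..t}" using energy_eq(1)[OF i t0] .
  have it: "rr i integrable_on {0..t}" using ht by blast
  have c: "integral {0..s} (rr i) + integral {s..t} (rr i) = integral {0..t} (rr i)"
    using Henstock_Kurzweil_Integration.integral_combine[where a=0 and c=s and b=t and f="rr i"] st it by auto
  have "0 \<le> integral {s..t} (rr i)"
    using integrable_subinterval_real[OF it, of s t] st rr_bounds[OF i]
    by (intro integral_nonneg) auto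
  then have "P i * zt t i \<le> P i * zt s i" using c integral_unique[OF hs] integral_unique[OF ht] by simp
  then show ?thesis using Ppos[OF i] by simp
qed

lemma sum_rr:
  assumes t: "0 \<le> t"
  shows "ggddf_at S P d (energy E0 rr) rr t \<and> (\<Sum>i\<in>S. rr i t) = db (zt t) t"
  using alg[of "energy E0 rr" t "zt t" rr] energy_eq(2) closed_loop t dnn[OF t]
  by (simp add: db_def)

lemma full_rate:
  assumes T: "0 \<le> T" and fail: "NP (zt T) < d T" and k: "k \<in> S" "0 < zt T k"
    and s: "0 \<le> s" "s \<le> T"
  shows "rr k s = P k"
proof -
  define z where "z = zt s"
  define J where "J = {j\<in>S. z k \<le> z j}"
  define K where "K = {j\<in>S. 0 < zt T j}"
  have zk: "0 < z k" using zt_anti[OF k(1) s] k by (simp add: z_def)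
  have JK: "J \<subseteq> K"
  proof
    fix j assume "j \<in> J"
    then have j: "j \<in> S" "z k \<le> z j" by (auto simp: J_def)
    have "zt T k \<le> zt T j" using zt_order[OF k(1) j(1) s] j by (simp add: z_def)
    then show "j \<in> K" using j k by (simp add: K_def)
  qed
  have AB: "Ab z (z k) + Bb z (z k) = (\<Sum>j\<in>J. P j)"
    unfolding Ab_def Bb_def J_def
    by (subst sum.union_disjoint[symmetric]) (use fin in \<open>auto intro!: sum.cong\<close>)
  have "(\<Sum>j\<in>J. P j) \<le> (\<Sum>j\<in>K. P j)" by (rule sumP_mono[OF JK]) (auto simp: K_def)
  also have "\<dots> = NP (zt T)" by (simp add: K_def NP_def)
  finally have "(\<Sum>j\<in>J. P j) < d s" using fail dmono[OF s] by simp
  moreover have "(\<Sum>j\<in>J. P j) \<le> NP z" unfolding NP_def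
    by (rule sumP_mono) (use zk in \<open>auto simp: J_def\<close>)
  ultimately have "Ab z (z k) + Bb z (z k) \<le> db z s" using AB by (simp add: db_def)
  then have "1 \<le> (db z s - Ab z (z k)) / Bb z (z k)" using Bb_pos[OF k(1), of z] by (simp add: field_simps)
  then have "rate z (db z s) (z k) = 1" using zk by (simp add: rate_def clamp_def)
  then show ?thesis using closed_loop[OF k(1) s(1)] by (simp add: z_def)
qed

lemma fail_int:
  assumes T: "0 \<le> T" and fail: "NP (zt T) < d T"
  shows "(\<Sum>i\<in>S. min (E0 i) (P i * T)) \<le> integral {0..T} (\<lambda>t. \<Sum>i\<in>S. rr i t)"
proof -
  have ri: "rr i integrable_on {0..T}" if "i \<in> S" for i using energy_eq(1)[OF that T] by blast
  have "integral {0..T} (\<lambda>t. \<Sum>i\<in>S. rr i t) = (\<Sum>i\<in>S. integral {0..T} (rr i))"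
    by (rule integral_sum) (use ri fin in auto)
  moreover have "min (E0 i) (P i * T) \<le> integral {0..T} (rr i)" if i: "i \<in> S" for i
  proof (cases "0 < zt T i")
    case True
    have "integral {0..T} (rr i) = integral {0..T} (\<lambda>_. P i)"
      by (rule integral_cong) (use full_rate[OF T fail i True] in auto)
    then show ?thesis using T by (simp add: mult.commute)
  next
    case False
    then have "zt T i = 0" using zt_nn[OF i T] by simp
    then have "integral {0..T} (rr i) = E0 i" using integral_unique[OF energy_eq(1)[OF i T]] by simp
    then show ?thesis by simp
  qed
  ultimately show ?thesis by (simp add: sum_mono)
qed

lemma fail_ae:
  assumes T: "0 \<le> T" and fail: "NP (zt T) < d T"
    and di: "d integrable_on {0..T}" and bd: "integral {0..T} d \<le> (\<Sum>i\<in>S. min (E0 i) (P i * T))"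
  shows "AE t in lborel. t \<in> {0..T} \<longrightarrow> (\<Sum>i\<in>S. rr i t) = d t"
proof -
  have ri: "rr i integrable_on {0..T}" if "i \<in> S" for i using energy_eq(1)[OF that T] by blast
  have si: "(\<lambda>t. \<Sum>i\<in>S. rr i t) integrable_on {0..T}" by (rule integrable_sum) (use ri fin in auto)
  define h where "h t = d t - (\<Sum>i\<in>S. rr i t)" for t
  have hi: "h integrable_on {0..T}" unfolding h_def by (intro integrable_diff di si)
  have nn: "0 \<le> h t" if "t \<in> {0..T}" for t
    using sum_rr[of t] that by (auto simp: h_def db_def)
  have "integral {0..T} h = integral {0..T} d - integral {0..T} (\<lambda>t. \<Sum>i\<in>S. rr i t)"
    unfolding h_def by (rule integral_diff[OF di si])
  then have "integral {0..T} h \<le> 0" using fail_int[OF T fail] bd by simp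
  moreover have "0 \<le> integral {0..T} h" using hi nn by (intro integral_nonneg) auto
  ultimately have "integral {0..T} h = 0" by simp
  then have ae: "AE t in lborel. t \<in> {0..T} \<longrightarrow> h t = 0" using nonneg_int0_AE[OF hi nn] by blast
  show ?thesis using ae by eventually_elim (auto simp: h_def)
qed

end



lemma served_nonneg: assumes "\<And>i. i \<in> S \<Longrightarrow> 0 \<le> r i t" shows "served_rate S eta r t = (\<Sum>i\<in>S. r i t)"
proof -
  have a: "{i\<in>S. r i t < 0} = {}" using assms by (auto simp: not_less)
  have b: "{i\<in>S. r i t \<ge> 0} = S" using assms by auto
  show ?thesis unfolding served_rate_def a b by simp
qed

theorem theorem2:
  fixes S :: "'i set" and cap P P' eta E0 :: "'i \<Rightarrow> real" and d :: "real \<Rightarrow> real"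
  assumes "finite S"
    and "\<forall>i\<in>S. cap i > 0 \<and> P i > 0 \<and> P' i \<ge> 0 \<and> 0 < eta i \<and> eta i \<le> 1"
    and "\<forall>t\<ge>0. d t \<ge> 0"
    and "\<forall>t\<ge>0. d integrable_on {0..t}"
    and "\<forall>s t. 0 \<le> s \<and> s \<le> t \<longrightarrow> d t \<le> d s"
    and "\<exists>r. cc_policy S cap P P' eta E0 d r \<and> completely_serves S eta d r"
  shows "\<exists>r. cc_policy S cap P P' eta E0 d r \<and> no_cross_charging S r \<and>
             is_ggddf S P E0 d r \<and> completely_serves S eta d r"
proof -
  obtain r0 where cc0: "cc_policy S cap P P' eta E0 d r0" and cs0: "completely_serves S eta d r0"
    using assms(6) by blast
  have E0b: "0 \<le> E0 i \<and> E0 i \<le> cap i" if "i \<in> S" for i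
    using cc0 that unfolding cc_policy_def energy_def by force
  interpret G: gg S P d using assms(1,2,3,5) by unfold_locales auto
  interpret G0: gg0 S P d "\<lambda>i. E0 i / P i" E0
  proof unfold_locales
    fix i assume i: "i \<in> S"
    show "0 \<le> E0 i / P i" using E0b[OF i] G.Ppos[OF i] by simp
    show "E0 i = P i * (E0 i / P i)" using G.Ppos[OF i] by simp
  qed
  have rb: "0 \<le> G0.rr i t \<and> G0.rr i t \<le> P i" if "i \<in> S" for i t using G0.rr_bounds[OF that] .
  have served: "served_rate S eta G0.rr t = (\<Sum>i\<in>S. G0.rr i t)" for t
    using rb by (intro served_nonneg) auto
  have sumrr: "(\<Sum>i\<in>S. G0.rr i t) = min (d t) (G.NP (G0.zt t))" if "0 \<le> t" for t
    using G0.sum_rr[OF that] by (simp add: G.db_def)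
  show ?thesis
  proof (intro exI conjI)
    show "cc_policy S cap P P' eta E0 d G0.rr"
      unfolding cc_policy_def
    proof (intro conjI ballI allI impI)
      fix i assume i: "i \<in> S"
      show "set_borel_measurable lborel {0..} (G0.rr i)" by (rule G0.rr_meas[OF i])
      fix t :: real assume t: "0 \<le> t"
      show "0 \<le> energy E0 G0.rr i t" using G0.energy_eq(2)[OF i t] G0.zt_nn[OF i t] G.Ppos[OF i] by simp
      have "0 \<le> integral {0..t} (G0.rr i)"
        using G0.energy_eq(1)[OF i t] rb[OF i] by (intro integral_nonneg) auto
      then show "energy E0 G0.rr i t \<le> cap i" using E0b[OF i] by (simp add: energy_def)
      show "- P' i \<le> G0.rr i t" using rb[OF i, of t] assms(2) i by force
      show "G0.rr i t \<le> P i" using rb[OF i] by simp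
    next
      fix t :: real assume t: "0 \<le> t"
      show "0 \<le> served_rate S eta G0.rr t" "served_rate S eta G0.rr t \<le> d t"
        unfolding served sumrr[OF t] using G.NP_nonneg assms(3) t by auto
    qed
    show "no_cross_charging S G0.rr" using rb by (simp add: no_cross_charging_def)
    show "is_ggddf S P E0 d G0.rr" unfolding is_ggddf_def
      by (intro AE_I2 impI) (use G0.sum_rr in blast)
    have "AE t in lborel. 0 \<le> t \<longrightarrow> (\<Sum>i\<in>S. G0.rr i t) = d t"
    proof (rule cover_AE[where F = "{T. 0 \<le> T \<and> G.NP (G0.zt T) < d T}"])
      fix T assume "T \<in> {T. 0 \<le> T \<and> G.NP (G0.zt T) < d T}"
      then have T: "0 \<le> T" "G.NP (G0.zt T) < d T" by auto
      have di: "d integrable_on {0..T}" using assms(4) T by auto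
      have bd: "integral {0..T} d \<le> (\<Sum>i\<in>S. min (E0 i) (P i * T))"
        by (rule cc_bound[OF assms(1,2) cc0 cs0 di T(1)])
      show "AE t in lborel. t \<in> {0..T} \<longrightarrow> (\<Sum>i\<in>S. G0.rr i t) = d t"
        by (rule G0.fail_ae[OF T di bd])
    next
      fix t :: real assume "0 \<le> t" "t \<notin> {T. 0 \<le> T \<and> G.NP (G0.zt T) < d T}"
      then show "(\<Sum>i\<in>S. G0.rr i t) = d t" using sumrr by auto
    qed
    then show "completely_serves S eta d G0.rr" unfolding completely_serves_def served .
  qed
qed



end
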